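(* In the situation of the context, assume $\mathfrak C_R \subseteq \mathfrak m^2$ and $a_1 + a_n \ge c_R$. Then $S$ has Herzog–Kunz generators $\widetilde x_1, \ldots, \widetilde x_{n+s}$ (so $S = k[[\widetilde x_1,\ldots,\widetilde x_{n+s}]]$) such that $t^{a_1}, t^{a_n}, t^{b_1}, \ldots, t^{b_s}$ are among the $\widetilde x_j$.
   Context: Let $k$ be an algebraically closed field of characteristic $0$ and let $(R,\mathfrak m)$ be a complete local noetherian domain of dimension $1$ containing $k$ with $R/\mathfrak m = k$; its normalization is $\overline R = k[[t]]$, $R\subseteq k[[t]]$ finite birational. Let $v$ be the $t$-adic valuation; for $A \subseteq k((t))$ let $v(A)=\{v(f): f\in A\setminus\{0\}\}$, and $V(T)=v(T)$ for a ring $T$. The conductor is $\mathfrak C_R=\{x\in\overline R: x\overline R\subseteq R\} = t^{c_R}\overline R$. For any such ring $T$ (with maximal ideal $\mathfrak m_T$), its Herzog–Kunz sequence is $v(\mathfrak m_T)\setminus v(\mathfrak m_T^2)$ listed increasingly, and Herzog–Kunz generators are elements of $T$ having exactly these valuations (they generate $T$ as $k[[\cdot]]$, the image of a power series ring). Let $a_1<\cdots<a_n$ be the Herzog–Kunz sequence of $R$ and $x_1,\ldots,x_n$ Herzog–Kunz generators of $R$ with $x_1 = t^{a_1}$. Let $S = R[\mathfrak C_R/x_1]$ and let $b_1<\cdots<b_s$ be the elements of $\{c_R-a_1, \ldots, c_R-1\}$ not in $V(R)$. Known facts (used as given): $S = R[t^{b_1},\ldots,t^{b_s}]$, $c_S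 = c_R - a_1$, and $\mathrm{edim}(S) = n+s$. *)

theory Defs
  imports "HOL-Computational_Algebra.Computational_Algebra"
begin

text \<open>Setting: k is a field (type 'a) of characteristic 0, algebraically closed;
  the normalization k[[t]] is the type 'a fps, t = fps_X, and v = subdegree.\<close>

definition alg_closed_field :: "'a::field itself \<Rightarrow> bool" where
  "alg_closed_field _ \<longleftrightarrow> (\<forall>p :: 'a poly. degree p > 0 \<longrightarrow> (\<exists>x. poly p x = 0))"

definition k_subalg :: "'a::field fps set \<Rightarrow> bool" where
  "k_subalg T \<longleftrightarrow> (\<forall>c. fps_const c \<in> T) \<and>
     (\<forall>f\<in>T. \<forall>g\<in>T. f + g \<in> T \<and> f * g \<in> T) \<and> (\<forall>f\<in>T. - f \<in> T)"

text \<open>A complete local one-dimensional domain R with k \<subseteq> R \<subseteq> k[[t]], residue field k,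
  and k[[t]] finite birational over R: equivalently a k-subalgebra of k[[t]] with
  nonzero conductor (i.e. containing t^c k[[t]] for some c).\<close>
definition curve_ring :: "'a::field fps set \<Rightarrow> bool" where
  "curve_ring R \<longleftrightarrow> k_subalg R \<and> (\<exists>c. \<forall>g. fps_X ^ c * g \<in> R)"

definition vals :: "'a::field fps set \<Rightarrow> nat set" where
  "vals A = subdegree ` (A - {0})"

definition max_ideal :: "'a::field fps set \<Rightarrow> 'a fps set" where
  "max_ideal T = {f \<in> T. fps_nth f 0 = 0}"

definition max_ideal_sq :: "'a::field fps set \<Rightarrow> 'a fps set" where
  "max_ideal_sq T = {sum_list (map (\<lambda>(a, b). a * b) ps) | ps.
       set ps \<subseteq> max_ideal T \<times> max_ideal T}"

definition HK_seq :: "'a::field fps set \<Rightarrow> nat list" where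
  "HK_seq T = sorted_list_of_set (vals (max_ideal T) - vals (max_ideal_sq T))"

definition HK_gens :: "'a::field fps set \<Rightarrow> 'a fps list \<Rightarrow> bool" where
  "HK_gens T xs \<longleftrightarrow> set xs \<subseteq> T \<and> 0 \<notin> set xs \<and> map subdegree xs = HK_seq T"

definition conductor :: "'a::field fps set \<Rightarrow> 'a fps set" where
  "conductor R = {x. \<forall>y. x * y \<in> R}"

definition cond_exp :: "'a::field fps set \<Rightarrow> nat" where
  "cond_exp R = (LEAST c. fps_X ^ c \<in> conductor R)"

definition gen_subalg :: "'a::field fps set \<Rightarrow> 'a fps set" where
  "gen_subalg A = \<Inter> {T. k_subalg T \<and> A \<subseteq> T}"

text \<open>S = R[C_R / x_1] with x_1 = t^{a_1}.\<close>
definition blowup_ring :: "'a::field fps set \<Rightarrow> nat \<Rightarrow> 'a fps set" where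
  "blowup_ring R a1 = gen_subalg (R \<union> {g. g * fps_X ^ a1 \<in> conductor R})"

end

theory Submission imports Defs begin

definition Tk :: "nat \<Rightarrow> 'a::field fps set" where
  "Tk k = {f. \<forall>i<k. f $ i = 0}"

lemma Tk_add: "f \<in> Tk k \<Longrightarrow> g \<in> Tk k \<Longrightarrow> f + g \<in> Tk k"
  by (simp add: Tk_def)
lemma Tk_uminus: "f \<in> Tk k \<Longrightarrow> - f \<in> Tk k"
  by (simp add: Tk_def)
lemma Tk_zero[simp]: "0 \<in> Tk k" by (simp add: Tk_def)
lemma Tk_mono: "j \<le> k \<Longrightarrow> f \<in> Tk k \<Longrightarrow> f \<in> Tk j"
  by (simp add: Tk_def)
lemma Tk_X: "fps_X ^ k * u \<in> Tk k"
  by (simp add: Tk_def fps_X_power_mult_nth)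
lemma Tk_decomp: "f \<in> Tk k \<Longrightarrow> f = fps_shift k f * fps_X ^ k"
proof (cases "f = 0")
  case False
  assume "f \<in> Tk k"
  then have "k \<le> subdegree f" using False by (intro subdegree_geI) (auto simp: Tk_def)
  then show ?thesis by (rule subdegree_decompose')
qed simp
lemma Tk_mult: "f \<in> Tk k \<Longrightarrow> g \<in> Tk j \<Longrightarrow> f * g \<in> Tk (k + j)"
proof -
  assume f: "f \<in> Tk k" and g: "g \<in> Tk j"
  have "f * g = fps_X ^ (k + j) * (fps_shift k f * fps_shift j g)"
    apply (subst Tk_decomp[OF f], subst Tk_decomp[OF g])
    by (simp add: power_add algebra_simps)
  then show ?thesis by (metis Tk_X)
qed
lemma Tk_mult_left: "g \<in> Tk j \<Longrightarrow> f * g \<in> Tk j"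
  using Tk_mult[of f 0 g j] by (simp add: Tk_def)
lemma Tk_subdeg: "f \<in> Tk k \<Longrightarrow> f \<noteq> 0 \<Longrightarrow> k \<le> subdegree f"
  by (intro subdegree_geI) (auto simp: Tk_def)
lemma Tk_subdegI: "f = 0 \<or> k \<le> subdegree f \<Longrightarrow> f \<in> Tk k"
proof (cases "f = 0")
  case False
  assume "f = 0 \<or> k \<le> subdegree f"
  then have "k \<le> subdegree f" using False by simp
  then show ?thesis unfolding Tk_def
    by (auto intro!: nth_less_subdegree_zero)
qed simp
lemma X_pow_Tk: "j \<le> k \<Longrightarrow> (fps_X ^ k :: 'a::field fps) \<in> Tk j"
  by (auto simp: Tk_def)
lemma X_pow_Tk_iff: "(fps_X ^ k :: 'a::field fps) \<in> Tk j \<longleftrightarrow> j \<le> k"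
  by (auto simp: Tk_def)

lemma sum_list_closed:
  assumes "0 \<in> A" "\<And>x y. x \<in> A \<Longrightarrow> y \<in> A \<Longrightarrow> x + y \<in> A"
    "\<And>a b. (a, b) \<in> set ps \<Longrightarrow> a * b \<in> A"
  shows "sum_list (map (\<lambda>(a, b). a * b) ps) \<in> A"
  using assms(3) by (induction ps) (auto simp: assms(1,2))

lemma sq_add: "x \<in> max_ideal_sq T \<Longrightarrow> y \<in> max_ideal_sq T \<Longrightarrow> x + y \<in> max_ideal_sq T"
  unfolding max_ideal_sq_def
  apply clarify
  subgoal for ps qs by (rule exI[of _ "ps @ qs"]) auto
  done
lemma sq_zero: "0 \<in> max_ideal_sq T"
  unfolding max_ideal_sq_def by (rule CollectI, rule exI[of _ "[]"]) auto
lemma sq_prod: "a \<in> max_ideal T \<Longrightarrow> b \<in> max_ideal T \<Longrightarrow> a * b \<in> max_ideal_sq T"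
  unfolding max_ideal_sq_def by (rule CollectI, rule exI[of _ "[(a,b)]"]) auto
lemma sq_elim: "x \<in> max_ideal_sq T \<Longrightarrow> 0 \<in> A \<Longrightarrow> (\<And>x y. x \<in> A \<Longrightarrow> y \<in> A \<Longrightarrow> x + y \<in> A)
   \<Longrightarrow> (\<And>a b. a \<in> max_ideal T \<Longrightarrow> b \<in> max_ideal T \<Longrightarrow> a * b \<in> A) \<Longrightarrow> x \<in> A"
  unfolding max_ideal_sq_def apply clarify
  apply (rule sum_list_closed) by auto

lemma sq_Tk: "max_ideal T \<subseteq> Tk k \<Longrightarrow> max_ideal_sq T \<subseteq> Tk (2 * k)"
  apply clarify
  apply (erule sq_elim)
  using Tk_mult[of _ k _ k] by (auto intro: Tk_add simp: mult_2)

lemma max_ideal_Tk1: "max_ideal T \<subseteq> Tk 1"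
  by (auto simp: max_ideal_def Tk_def)

lemma sq_sub: "k_subalg T \<Longrightarrow> max_ideal_sq T \<subseteq> T"
  apply clarify
  apply (erule sq_elim)
  by (auto simp: k_subalg_def max_ideal_def) (metis fps_const_0_eq_0)

lemma sq_max: "k_subalg T \<Longrightarrow> max_ideal_sq T \<subseteq> max_ideal T"
proof -
  assume "k_subalg T"
  then have "max_ideal_sq T \<subseteq> T" by (rule sq_sub)
  moreover have "max_ideal_sq T \<subseteq> Tk 2" using sq_Tk[OF max_ideal_Tk1] by simp
  ultimately show ?thesis by (auto simp: max_ideal_def Tk_def)
qed

lemma sq_mono: "max_ideal A \<subseteq> max_ideal B \<Longrightarrow> max_ideal_sq A \<subseteq> max_ideal_sq B"
  unfolding max_ideal_sq_def by blast

lemma vals_mono: "A \<subseteq> B \<Longrightarrow> vals A \<subseteq> vals B"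
  unfolding vals_def by blast

lemma valsI: "f \<in> A \<Longrightarrow> f \<noteq> 0 \<Longrightarrow> subdegree f = h \<Longrightarrow> h \<in> vals A"
  unfolding vals_def by blast


theorem mainTheorem12:
  fixes R :: "'a::field_char_0 fps set"
  assumes "alg_closed_field TYPE('a)"
    and "curve_ring R"
    and "conductor R \<subseteq> max_ideal_sq R"
    and "HK_seq R \<noteq> []"
    and "fps_X ^ hd (HK_seq R) \<in> R"
    and "hd (HK_seq R) + last (HK_seq R) \<ge> cond_exp R"
  shows "\<exists>xs. HK_gens (blowup_ring R (hd (HK_seq R))) xs
           \<and> length xs = length (HK_seq R)
                + card ({cond_exp R - hd (HK_seq R) ..< cond_exp R} - vals R)
           \<and> fps_X ^ hd (HK_seq R) \<in> set xs
           \<and> fps_X ^ last (HK_seq R) \<in> set xs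
           \<and> (\<forall>b \<in> {cond_exp R - hd (HK_seq R) ..< cond_exp R} - vals R.
                 fps_X ^ b \<in> set xs)"
proof -
  define c where "c = cond_exp R"
  define a1 where "a1 = hd (HK_seq R)"
  define an where "an = last (HK_seq R)"
  define d where "d = c - a1"
  define HKR where "HKR = vals (max_ideal R) - vals (max_ideal_sq R)"
  define S where "S = blowup_ring R a1"
  define B where "B = {d..<c} - vals R"
  have kR: "k_subalg R" using assms(2) by (simp add: curve_ring_def)
  obtain c0 where c0: "\<And>g. fps_X ^ c0 * g \<in> R" using assms(2) by (auto simp: curve_ring_def)
  have "fps_X ^ c0 \<in> conductor R" using c0 by (simp add: conductor_def)
  then have Xc: "fps_X ^ c \<in> conductor R" unfolding c_def cond_exp_def by (rule LeastI)
  have TcC: "Tk c \<subseteq> conductor R"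
  proof
    fix f :: "'a fps" assume f: "f \<in> Tk c"
    obtain u where u: "f = u * fps_X ^ c" using Tk_decomp[OF f] by blast
    have X: "fps_X ^ c * y \<in> R" for y using Xc unfolding conductor_def by simp
    have "f * y \<in> R" for y
    proof -
      have e: "f * y = fps_X ^ c * (u * y)" unfolding u by (simp only: mult_ac)
      show ?thesis unfolding e by (rule X)
    qed
    then show "f \<in> conductor R" unfolding conductor_def by simp
  qed
  have CTk: "conductor R \<subseteq> Tk c"
  proof
    fix x :: "'a fps" assume x: "x \<in> conductor R"
    show "x \<in> Tk c"
    proof (rule Tk_subdegI, rule ccontr)
      assume "\<not> (x = 0 \<or> c \<le> subdegree x)"
      then have nz: "x \<noteq> 0" and lt: "subdegree x < c" by auto
      define m where "m = subdegree x"
      define u where "u = fps_shift m x"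
      have xu: "x = u * fps_X ^ m" unfolding u_def m_def by (rule subdegree_decompose)
      have u0: "u $ 0 \<noteq> 0" using nz by (simp add: u_def m_def)
      have E: "fps_X ^ m * y = x * (inverse u * y)" for y
      proof -
        have "x * (inverse u * y) = fps_X ^ m * y * (inverse u * u)"
          by (simp add: xu algebra_simps)
        also have "\<dots> = fps_X ^ m * y" by (simp only: inverse_mult_eq_1[OF u0] mult_1_right)
        finally show ?thesis by (rule sym)
      qed
      have xR: "x * z \<in> R" for z using x by (simp add: conductor_def)
      have "fps_X ^ m * y \<in> R" for y unfolding E by (rule xR)
      then have "fps_X ^ m \<in> conductor R" by (simp add: conductor_def)
      then have "c \<le> m" unfolding c_def cond_exp_def by (rule Least_le)
      then show False using lt m_def by simp
    qed
  qed
  have TcSq: "Tk c \<subseteq> max_ideal_sq R" using TcC assms(3) by blast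
  have TcR: "Tk c \<subseteq> R" using TcSq sq_sub[OF kR] by blast
  have HKR_fin: "HKR \<subseteq> {..<c}"
  proof
    fix h assume h: "h \<in> HKR"
    show "h \<in> {..<c}"
    proof (rule ccontr)
      assume "h \<notin> {..<c}"
      then have "(fps_X ^ h :: 'a fps) \<in> max_ideal_sq R" using TcSq X_pow_Tk[of c h] by auto
      then have "h \<in> vals (max_ideal_sq R)" by (intro valsI[of "fps_X ^ h"]) auto
      then show False using h by (simp add: HKR_def)
    qed
  qed
  then have finHKR: "finite HKR" by (rule finite_subset) simp
  have setR: "set (HK_seq R) = HKR" using finHKR by (simp add: HK_seq_def HKR_def)
  have HKRne: "HKR \<noteq> {}" using assms(4) setR by auto
  have a1Min: "a1 = Min HKR"
    using sorted_list_of_set_nonempty[OF finHKR HKRne] by (simp add: a1_def HK_seq_def HKR_def)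
  have a1in: "a1 \<in> HKR" using a1Min finHKR HKRne by simp
  have anin: "an \<in> HKR" using assms(4) setR an_def by auto
  have mRR: "max_ideal R \<subseteq> R" by (auto simp: max_ideal_def)
  have HKR_sub: "HKR \<subseteq> vals (max_ideal R)" by (auto simp: HKR_def)
  have vals_ge1: "h \<in> vals (max_ideal R) \<Longrightarrow> 1 \<le> h" for h
    using max_ideal_Tk1[of R] Tk_subdeg by (auto simp: vals_def)
  have a1ge: "1 \<le> a1" using a1in HKR_sub vals_ge1 by blast
  have mR_a1: "max_ideal R \<subseteq> Tk a1"
  proof -
    define V where "V = vals (max_ideal R)"
    have "a1 \<in> V" using a1in HKR_sub V_def by blast
    define m0 where "m0 = (LEAST v. v \<in> V)"
    have m0V: "m0 \<in> V" unfolding m0_def using \<open>a1 \<in> V\<close> by (rule LeastI)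
    have mRm0: "max_ideal R \<subseteq> Tk m0"
    proof
      fix f :: "'a fps" assume f: "f \<in> max_ideal R"
      show "f \<in> Tk m0"
      proof (rule Tk_subdegI, cases "f = 0")
        case False
        then have "subdegree f \<in> V" using f by (auto simp: V_def vals_def)
        then show "f = 0 \<or> m0 \<le> subdegree f" unfolding m0_def by (simp add: Least_le)
      qed simp
    qed
    have m0ge: "1 \<le> m0" using m0V vals_ge1 V_def by blast
    have "m0 \<notin> vals (max_ideal_sq R)"
    proof
      assume "m0 \<in> vals (max_ideal_sq R)"
      then obtain f where "f \<in> max_ideal_sq R" "f \<noteq> 0" "subdegree f = m0" by (auto simp: vals_def)
      then have "2 * m0 \<le> m0" using sq_Tk[OF mRm0] Tk_subdeg by blast
      then show False using m0ge by simp
    qed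
    then have "m0 \<in> HKR" using m0V by (simp add: HKR_def V_def)
    then have "a1 \<le> m0" using a1Min finHKR by simp
    then show ?thesis using mRm0 Tk_mono by blast
  qed
  have c2a1: "2 * a1 \<le> c"
  proof -
    have "(fps_X ^ c :: 'a fps) \<in> Tk (2 * a1)" using Xc assms(3) sq_Tk[OF mR_a1] by blast
    then show ?thesis by (simp add: X_pow_Tk_iff)
  qed
  have dge: "a1 \<le> d" "1 \<le> d" "d + a1 = c" using c2a1 a1ge by (auto simp: d_def)
  define G where "G = {g. g * fps_X ^ a1 \<in> conductor R}"
  have GTk: "G \<subseteq> Tk d"
  proof
    fix g :: "'a fps" assume "g \<in> G"
    then have gc: "g * fps_X ^ a1 \<in> Tk c" using CTk by (auto simp: G_def)
    show "g \<in> Tk d" unfolding Tk_def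
    proof (intro CollectI allI impI)
      fix i assume "i < d"
      then have "(g * fps_X ^ a1) $ (i + a1) = 0" using gc dge by (auto simp: Tk_def)
      then show "g $ i = 0" by (simp add: fps_X_power_mult_right_nth)
    qed
  qed
  have TkG: "Tk d \<subseteq> G"
  proof
    fix g :: "'a fps" assume "g \<in> Tk d"
    then have "g * fps_X ^ a1 \<in> Tk (d + a1)" using Tk_mult X_pow_Tk by blast
    then show "g \<in> G" using TcC dge by (auto simp: G_def)
  qed
  define RT where "RT = {r + g | r g. r \<in> R \<and> g \<in> Tk d}"
  have kRT: "k_subalg RT"
    unfolding k_subalg_def
  proof (intro conjI ballI allI)
    fix x
    have "fps_const x = fps_const x + 0" "fps_const x \<in> R" "(0::'a fps) \<in> Tk d"
      using kR by (auto simp: k_subalg_def)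
    then show "fps_const x \<in> RT" unfolding RT_def by blast
  next
    fix f g assume "f \<in> RT" "g \<in> RT"
    then obtain r1 g1 r2 g2 where f: "f = r1 + g1" "r1 \<in> R" "g1 \<in> Tk d"
      and g: "g = r2 + g2" "r2 \<in> R" "g2 \<in> Tk d" unfolding RT_def by blast
    have "f + g = (r1 + r2) + (g1 + g2)" using f g by (simp add: algebra_simps)
    moreover have "r1 + r2 \<in> R" using kR f g by (simp add: k_subalg_def)
    moreover have "g1 + g2 \<in> Tk d" using f g Tk_add by blast
    ultimately show "f + g \<in> RT" unfolding RT_def by blast
    have "f * g = (r1 * r2) + (r1 * g2 + r2 * g1 + g1 * g2)" using f g by (simp add: algebra_simps)
    moreover have "r1 * r2 \<in> R" using kR f g by (simp add: k_subalg_def)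
    moreover have "r1 * g2 + r2 * g1 + g1 * g2 \<in> Tk d" using f g Tk_add Tk_mult_left by blast
    ultimately show "f * g \<in> RT" unfolding RT_def by blast
  next
    fix f assume "f \<in> RT"
    then obtain r1 g1 where f: "f = r1 + g1" "r1 \<in> R" "g1 \<in> Tk d" unfolding RT_def by blast
    have "- f = (- r1) + (- g1)" using f by simp
    moreover have "- r1 \<in> R" using kR f by (simp add: k_subalg_def)
    ultimately show "- f \<in> RT" using f Tk_uminus unfolding RT_def by blast
  qed
  have zR: "(0::'a fps) \<in> R" using kR unfolding k_subalg_def by (metis fps_const_0_eq_0)
  have RRT: "R \<subseteq> RT"
  proof
    fix r :: "'a fps" assume "r \<in> R"
    moreover have "r = r + 0" "(0::'a fps) \<in> Tk d" by simp_all
    ultimately show "r \<in> RT" unfolding RT_def by blast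
  qed
  have TRT: "Tk d \<subseteq> RT"
  proof
    fix g :: "'a fps" assume "g \<in> Tk d"
    moreover have "g = 0 + g" by simp
    ultimately show "g \<in> RT" unfolding RT_def using zR by blast
  qed
  have SRT: "S = RT"
  proof
    have "R \<subseteq> RT" by (rule RRT)
    moreover have "G \<subseteq> RT" using GTk TRT by blast
    ultimately show "S \<subseteq> RT" using kRT unfolding S_def blowup_ring_def gen_subalg_def G_def by blast
  next
    show "RT \<subseteq> S"
    proof
      fix f assume "f \<in> RT"
      then obtain r g where f: "f = r + g" "r \<in> R" "g \<in> Tk d" unfolding RT_def by blast
      show "f \<in> S" unfolding S_def blowup_ring_def gen_subalg_def
      proof (rule InterI)
        fix T assume "T \<in> {T. k_subalg T \<and> R \<union> {g. g * fps_X ^ a1 \<in> conductor R} \<subseteq> T}"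
        then have T: "k_subalg T" "R \<subseteq> T" "G \<subseteq> T" by (auto simp: G_def)
        then have "r \<in> T" "g \<in> T" using f TkG by blast+
        then show "f \<in> T" using T(1) f(1) unfolding k_subalg_def by blast
      qed
    qed
  qed
  have RS: "R \<subseteq> S" unfolding SRT by (rule RRT)
  have TdS: "Tk d \<subseteq> S" unfolding SRT by (rule TRT)
  have mS: "f \<in> max_ideal S \<Longrightarrow> \<exists>r g. f = r + g \<and> r \<in> max_ideal R \<and> g \<in> Tk d" for f
  proof -
    assume "f \<in> max_ideal S"
    then obtain r g where f: "f = r + g" "r \<in> R" "g \<in> Tk d" "f $ 0 = 0"
      unfolding SRT RT_def max_ideal_def by blast
    have "g $ 0 = 0" using f(3) dge by (auto simp: Tk_def)
    then have "r $ 0 = 0" using f by simp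
    then show ?thesis using f by (auto simp: max_ideal_def)
  qed
  have sqeq: "max_ideal_sq S = max_ideal_sq R"
  proof
    show "max_ideal_sq R \<subseteq> max_ideal_sq S" using RS by (intro sq_mono) (auto simp: max_ideal_def)
  next
    show "max_ideal_sq S \<subseteq> max_ideal_sq R"
    proof
      fix x assume "x \<in> max_ideal_sq S"
      then show "x \<in> max_ideal_sq R"
      proof (rule sq_elim)
        show "0 \<in> max_ideal_sq R" by (rule sq_zero)
      next
        fix x y assume "x \<in> max_ideal_sq R" "y \<in> max_ideal_sq R"
        then show "x + y \<in> max_ideal_sq R" by (rule sq_add)
      next
        fix a b assume "a \<in> max_ideal S" "b \<in> max_ideal S"
        then obtain r1 g1 r2 g2 where a: "a = r1 + g1" "r1 \<in> max_ideal R" "g1 \<in> Tk d"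
          and b: "b = r2 + g2" "r2 \<in> max_ideal R" "g2 \<in> Tk d" using mS by metis
        have ab: "a * b = r1 * r2 + (r1 * g2 + r2 * g1 + g1 * g2)" using a b by (simp add: algebra_simps)
        have "r1 * g2 \<in> Tk (a1 + d)" using a b mR_a1 Tk_mult by blast
        then have 1: "r1 * g2 \<in> Tk c" using dge by (simp add: add.commute)
        have "r2 * g1 \<in> Tk (a1 + d)" using a b mR_a1 Tk_mult by blast
        then have 2: "r2 * g1 \<in> Tk c" using dge by (simp add: add.commute)
        have "g1 * g2 \<in> Tk (d + d)" using a b Tk_mult by blast
        then have 3: "g1 * g2 \<in> Tk c" using dge Tk_mono[of c "d + d"] by simp
        have "r1 * g2 + r2 * g1 + g1 * g2 \<in> max_ideal_sq R" using 1 2 3 Tk_add TcSq by blast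
        moreover have "r1 * r2 \<in> max_ideal_sq R" using a b by (simp add: sq_prod)
        ultimately show "a * b \<in> max_ideal_sq R" using ab sq_add by metis
      qed
    qed
  qed
  define HKS where "HKS = vals (max_ideal S) - vals (max_ideal_sq S)"
  have HKS_eq: "HKS = HKR \<union> B"
  proof
    show "HKR \<union> B \<subseteq> HKS"
    proof
      fix h assume "h \<in> HKR \<union> B"
      then show "h \<in> HKS"
      proof
        assume "h \<in> HKR"
        moreover have "vals (max_ideal R) \<subseteq> vals (max_ideal S)"
          using RS by (intro vals_mono) (auto simp: max_ideal_def)
        ultimately show ?thesis by (auto simp: HKS_def HKR_def sqeq)
      next
        assume h: "h \<in> B"
        then have "(fps_X ^ h :: 'a fps) \<in> S" using TdS X_pow_Tk[of d h] by (auto simp: B_def)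
        moreover have "1 \<le> h" using h dge by (auto simp: B_def)
        ultimately have "(fps_X ^ h :: 'a fps) \<in> max_ideal S" by (auto simp: max_ideal_def)
        then have "h \<in> vals (max_ideal S)" by (intro valsI[of "fps_X ^ h"]) auto
        moreover have "h \<notin> vals (max_ideal_sq R)"
          using h vals_mono[OF sq_sub[OF kR]] by (auto simp: B_def)
        ultimately show ?thesis by (simp add: HKS_def sqeq)
      qed
    qed
  next
    show "HKS \<subseteq> HKR \<union> B"
    proof
      fix h assume h: "h \<in> HKS"
      then obtain f where f: "f \<in> max_ideal S" "f \<noteq> 0" "subdegree f = h"
        by (auto simp: HKS_def vals_def)
      have hsq: "h \<notin> vals (max_ideal_sq R)" using h by (simp add: HKS_def sqeq)
      have hc: "h < c"
      proof (rule ccontr)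
        assume "\<not> h < c"
        then have "(fps_X ^ h :: 'a fps) \<in> max_ideal_sq R" using TcSq X_pow_Tk[of c h] by auto
        then have "h \<in> vals (max_ideal_sq R)" by (intro valsI[of "fps_X ^ h"]) auto
        then show False using hsq by simp
      qed
      have h1: "1 \<le> h"
      proof -
        have "f \<in> Tk 1" using f max_ideal_Tk1 by blast
        then show ?thesis using f Tk_subdeg by blast
      qed
      show "h \<in> HKR \<union> B"
      proof (cases "h \<in> vals R")
        case True
        then obtain r where r: "r \<in> R" "r \<noteq> 0" "subdegree r = h" by (auto simp: vals_def)
        have "r $ 0 = 0" using r h1 by (intro nth_less_subdegree_zero) simp
        then have "r \<in> max_ideal R" using r by (simp add: max_ideal_def)
        then have "h \<in> vals (max_ideal R)" using r by (intro valsI) auto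
        then show ?thesis using hsq by (simp add: HKR_def)
      next
        case False
        obtain r g where rg: "f = r + g" "r \<in> max_ideal R" "g \<in> Tk d" using mS f(1) by blast
        have "d \<le> h"
        proof (rule ccontr)
          assume "\<not> d \<le> h"
          then have hd: "h < d" by simp
          have gz: "i \<le> h \<Longrightarrow> g $ i = 0" for i using rg(3) hd by (auto simp: Tk_def)
          have fh: "f $ h \<noteq> 0" using nth_subdegree_nonzero[OF f(2)] f(3) by simp
          have "f $ h = r $ h + g $ h" using rg(1) by simp
          then have "r $ h \<noteq> 0" using fh gz[of h] by simp
          moreover have "i < h \<Longrightarrow> r $ i = 0" for i
          proof -
            assume "i < h"
            then have "f $ i = 0" using f(3) by auto
            then show ?thesis using rg gz[of i] \<open>i < h\<close> by simp
          qed
          ultimately have "subdegree r = h" by (rule subdegreeI)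
          moreover have "r \<noteq> 0" using \<open>r $ h \<noteq> 0\<close> by auto
          ultimately have "h \<in> vals R" using rg mRR by (intro valsI[of r]) auto
          then show False using False by simp
        qed
        then show ?thesis using hc False by (simp add: B_def)
      qed
    qed
  qed
  have finB: "finite B" by (simp add: B_def)
  have disj: "HKR \<inter> B = {}"
    using HKR_sub vals_mono[OF mRR] by (auto simp: B_def)
  have finHKS: "finite HKS" using HKS_eq finB finHKR by simp
  have setS: "set (HK_seq S) = HKS" using finHKS by (simp add: HK_seq_def HKS_def)
  have lenS: "length (HK_seq S) = length (HK_seq R) + card B"
  proof -
    have "length (HK_seq S) = card HKS" using finHKS by (simp add: HK_seq_def HKS_def)
    also have "\<dots> = card HKR + card B" using HKS_eq finB finHKR disj card_Un_disjoint by metis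
    also have "card HKR = length (HK_seq R)" using finHKR by (simp add: HK_seq_def HKR_def)
    finally show ?thesis .
  qed
  have exS: "h \<in> HKS \<Longrightarrow> \<exists>g. g \<in> S \<and> g \<noteq> 0 \<and> subdegree g = h" for h
    by (auto simp: HKS_def vals_def max_ideal_def)
  define pick where "pick h = (if (fps_X ^ h :: 'a fps) \<in> S then fps_X ^ h
       else (SOME g. g \<in> S \<and> g \<noteq> 0 \<and> subdegree g = h))" for h
  have pick: "h \<in> HKS \<Longrightarrow> pick h \<in> S \<and> pick h \<noteq> 0 \<and> subdegree (pick h) = h" for h
  proof -
    assume "h \<in> HKS"
    then have "\<exists>g. g \<in> S \<and> g \<noteq> 0 \<and> subdegree g = h" by (rule exS)
    then show ?thesis unfolding pick_def using someI_ex[OF \<open>\<exists>g. _\<close>] by auto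
  qed
  define xs where "xs = map pick (HK_seq S)"
  have gens: "HK_gens S xs" unfolding HK_gens_def
  proof (intro conjI)
    show "set xs \<subseteq> S" using pick setS by (auto simp: xs_def)
    show "0 \<notin> set xs" using pick setS by (auto simp: xs_def)
    show "map subdegree xs = HK_seq S" unfolding xs_def map_map
      by (rule map_idI) (use pick setS in auto)
  qed
  have inxs: "h \<in> HKS \<Longrightarrow> (fps_X ^ h :: 'a fps) \<in> S \<Longrightarrow> fps_X ^ h \<in> set xs" for h
    using setS by (auto simp: xs_def pick_def intro!: image_eqI[of _ pick h])
  have "fps_X ^ a1 \<in> set xs" using a1in assms(5) RS inxs HKS_eq a1_def by blast
  moreover have "fps_X ^ an \<in> set xs"
  proof -
    have "d \<le> an" using assms(6) by (simp add: d_def c_def a1_def an_def)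
    then have "(fps_X ^ an :: 'a fps) \<in> S" using TdS X_pow_Tk by blast
    then show ?thesis using anin inxs HKS_eq by blast
  qed
  moreover have "\<forall>b \<in> B. fps_X ^ b \<in> set xs"
  proof
    fix b assume b: "b \<in> B"
    then have "(fps_X ^ b :: 'a fps) \<in> S" using TdS X_pow_Tk[of d b] by (auto simp: B_def)
    moreover have "b \<in> HKS" using b HKS_eq by simp
    ultimately show "fps_X ^ b \<in> set xs" using inxs by blast
  qed
  moreover have "length xs = length (HK_seq R) + card B" using lenS by (simp add: xs_def)
  ultimately show ?thesis using gens
    unfolding S_def B_def d_def c_def a1_def an_def by blast
qed

end
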